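(* Let $\epsilon\in\{1,-1\}$ and $j\ge1$. In each of the following three hierarchies (defined in the context), the $j$-th flow $q_{t_j}=F_j[q,r]$, $r_{t_j}=G_j[q,r]$ admits the constraint $r=\epsilon\bar q$, in the sense that for every smooth $q:\mathbb{R}^2\to\mathbb{C}$, $$G_j[q,\epsilon\bar q]=\epsilon\,\overline{F_j[q,\epsilon\bar q]},$$ so the constraint is preserved by the flow and the system reduces to the single equation $q_{t_j}=F_j[q,\epsilon\bar q]$: (1) the Kaup–Newell hierarchy; (2) the type II hierarchy; (3) the $\mathcal{B}$-twisted hierarchy with parameter $\alpha$, where $\alpha$ is purely imaginary ($\mathrm{Re}\,\alpha=0$).
   Context: Let $a=\mathrm{diag}(i,-i)$. For smooth complex-valued functions $q(x,t)$, $r(x,t)$ set $u=\begin{pmatrix}0&q\\ r&0\end{pmatrix}$. Consider formal series $Q=\sum_{k\le 2}Q_k\lambda^k$ in a formal parameter $\lambda$, whose coefficients $Q_k$ are traceless $2\times2$ matrices of smooth functions of $(x,t)$, with $Q_k$ diagonal for $k$ even and off-diagonal for $k$ odd. For a diagonal traceless matrix function $P$ (possibly $0$), let $Q^{P}$ denote the unique such series with $Q_2=a$, $Q_1=u$, satisfying $[\partial_x+a\lambda^2+u\lambda+P,\;Q]=0$ (i.e. $\partial_xQ+[a\lambda^2+u\lambda+P,Q]=0$ coefficientwise) and $Q^2=-\lambda^4 I$; its coefficients are differential polynomials in $q,r$. (1) Kaup–Newell hierarchy: with $Q=Q^{0}$, the $j$-th flow is $u_{t_j}=\partial_xQ_{3-2j}$.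 (2) Type II hierarchy: with $P_0=\frac{i}{2}\mathrm{diag}(qr,-qr)$ and $Q=Q^{P_0}$, the $j$-th flow is $u_{t_j}=\partial_xQ_{3-2j}+[P_0,Q_{3-2j}]+[u,Q_{2-2j}]$. (3) $\mathcal{B}$-twisted hierarchy with parameter $\alpha\in\mathbb{C}$: with $P_0^{\alpha}=-\alpha\,\mathrm{diag}(qr,-qr)$ and $Q=Q^{P_0^\alpha}$, the $j$-th flow is $u_{t_j}=\partial_xQ_{3-2j}+[P_0^\alpha,Q_{3-2j}]+[u,Q_{2-2j}-\mathcal{B}(Q_{2-2j})]$, where $\mathcal{B}(A)=(1-2\alpha i)A$ for diagonal $A$ (so the last term equals $2\alpha i[u,Q_{2-2j}]$). In each case the right-hand side is off-diagonal, of the form $\begin{pmatrix}0&F_j[q,r]\\ G_j[q,r]&0\end{pmatrix}$ with $F_j,G_j$ differential polynomials in $q,r$, and the flow is the system $q_{t_j}=F_j[q,r]$, $r_{t_j}=G_j[q,r]$. (For $j=2$: (1) gives $q_t=\frac12(iq_{xx}+(q^2r)_x)$, $r_t=\frac12(-ir_{xx}+(qr^2)_x)$.) *)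

theory Defs
  imports "HOL-Analysis.Analysis"
begin

type_synonym cfun = "real \<times> real \<Rightarrow> complex"
type_synonym mfun = "real \<times> real \<Rightarrow> complex^2^2"

definition dx :: "cfun \<Rightarrow> cfun" where
  "dx f = (\<lambda>(x,t). vector_derivative (\<lambda>s. f (s,t)) (at x))"

definition dt :: "cfun \<Rightarrow> cfun" where
  "dt f = (\<lambda>(x,t). vector_derivative (\<lambda>s. f (x,s)) (at t))"

fun Ck :: "nat \<Rightarrow> cfun set" where
  "Ck 0 = {f. continuous_on UNIV f}"
| "Ck (Suc n) = {f. continuous_on UNIV f
      \<and> (\<forall>x t. (\<lambda>s. f (s,t)) differentiable (at x))
      \<and> (\<forall>x t. (\<lambda>s. f (x,s)) differentiable (at t))
      \<and> dx f \<in> Ck n \<and> dt f \<in> Ck n}"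

definition smooth :: "cfun \<Rightarrow> bool" where
  "smooth f \<longleftrightarrow> (\<forall>n. f \<in> Ck n)"

definition mat2 :: "complex \<Rightarrow> complex \<Rightarrow> complex \<Rightarrow> complex \<Rightarrow> complex^2^2" where
  "mat2 a b c d = (\<chi> i j. if i = 1 then (if j = 1 then a else b) else (if j = 1 then c else d))"

definition comm :: "complex^2^2 \<Rightarrow> complex^2^2 \<Rightarrow> complex^2^2" where
  "comm A B = A ** B - B ** A"

definition traceless :: "complex^2^2 \<Rightarrow> bool" where
  "traceless A \<longleftrightarrow> A$1$1 + A$2$2 = 0"

definition is_diag :: "complex^2^2 \<Rightarrow> bool" where
  "is_diag A \<longleftrightarrow> A$1$2 = 0 \<and> A$2$1 = 0"

definition is_offdiag :: "complex^2^2 \<Rightarrow> bool" where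
  "is_offdiag A \<longleftrightarrow> A$1$1 = 0 \<and> A$2$2 = 0"

definition dxM :: "mfun \<Rightarrow> mfun" where
  "dxM M = (\<lambda>p. \<chi> i j. dx (\<lambda>p'. M p' $ i $ j) p)"

definition amat :: "complex^2^2" where
  "amat = mat2 \<i> 0 0 (-\<i>)"

definition umat :: "cfun \<Rightarrow> cfun \<Rightarrow> mfun" where
  "umat q r = (\<lambda>p. mat2 0 (q p) (r p) 0)"

text \<open>A formal series Q = sum_{k<=2} Q_k lambda^k is represented by its coefficient
  family Q :: int => mfun, with Q k = 0 for k > 2.  The conditions:
  Q_2 = a, Q_1 = u, coefficients traceless, smooth, diagonal for even k and
  off-diagonal for odd k; the coefficient of lambda^n of
  d_x Q + [a lambda^2 + u lambda + P, Q] vanishes, i.e.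
  d_x Q_n + [a,Q_(n-2)] + [u,Q_(n-1)] + [P,Q_n] = 0 for all n;
  and Q^2 = -lambda^4 I, i.e. sum_(i+j=n) Q_i Q_j = -delta_(n,4) I.\<close>

definition is_Qseries :: "mfun \<Rightarrow> cfun \<Rightarrow> cfun \<Rightarrow> (int \<Rightarrow> mfun) \<Rightarrow> bool" where
  "is_Qseries P q r Q \<longleftrightarrow>
     (\<forall>k>2. Q k = (\<lambda>p. 0))
   \<and> Q 2 = (\<lambda>p. amat)
   \<and> Q 1 = umat q r
   \<and> (\<forall>k p. traceless (Q k p))
   \<and> (\<forall>k p. even k \<longrightarrow> is_diag (Q k p))
   \<and> (\<forall>k p. odd k \<longrightarrow> is_offdiag (Q k p))
   \<and> (\<forall>k i j. smooth (\<lambda>p. Q k p $ i $ j))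
   \<and> (\<forall>n p. dxM (Q n) p + comm amat (Q (n-2) p) + comm (umat q r p) (Q (n-1) p)
              + comm (P p) (Q n p) = 0)
   \<and> (\<forall>n p. (\<Sum>i\<in>{n-2..2}. Q i p ** Q (n-i) p) = (if n = 4 then - mat 1 else 0))"

definition Qser :: "mfun \<Rightarrow> cfun \<Rightarrow> cfun \<Rightarrow> int \<Rightarrow> mfun" where
  "Qser P q r = (THE Q. is_Qseries P q r Q)"

definition P0 :: "cfun \<Rightarrow> cfun \<Rightarrow> mfun" where
  "P0 q r = (\<lambda>p. mat2 (\<i>/2 * q p * r p) 0 0 (-(\<i>/2 * q p * r p)))"

definition P0a :: "complex \<Rightarrow> cfun \<Rightarrow> cfun \<Rightarrow> mfun" where
  "P0a \<alpha> q r = (\<lambda>p. mat2 (-\<alpha> * (q p * r p)) 0 0 (\<alpha> * (q p * r p)))"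

text \<open>The operator B (applied only to diagonal matrices): B(A) = (1 - 2 alpha i) A.\<close>
definition Bop :: "complex \<Rightarrow> complex^2^2 \<Rightarrow> complex^2^2" where
  "Bop \<alpha> A = (\<chi> i j. (1 - 2 * \<alpha> * \<i>) * A $ i $ j)"

definition KN_rhs :: "nat \<Rightarrow> cfun \<Rightarrow> cfun \<Rightarrow> mfun" where
  "KN_rhs j q r = (let Q = Qser (\<lambda>p. 0) q r in dxM (Q (3 - 2 * int j)))"

definition TII_rhs :: "nat \<Rightarrow> cfun \<Rightarrow> cfun \<Rightarrow> mfun" where
  "TII_rhs j q r = (let Q = Qser (P0 q r) q r in
     (\<lambda>p. dxM (Q (3 - 2 * int j)) p + comm (P0 q r p) (Q (3 - 2 * int j) p)
          + comm (umat q r p) (Q (2 - 2 * int j) p)))"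

definition Btw_rhs :: "complex \<Rightarrow> nat \<Rightarrow> cfun \<Rightarrow> cfun \<Rightarrow> mfun" where
  "Btw_rhs \<alpha> j q r = (let Q = Qser (P0a \<alpha> q r) q r in
     (\<lambda>p. dxM (Q (3 - 2 * int j)) p + comm (P0a \<alpha> q r p) (Q (3 - 2 * int j) p)
          + comm (umat q r p) (Q (2 - 2 * int j) p - Bop \<alpha> (Q (2 - 2 * int j) p))))"

definition Fflow :: "mfun \<Rightarrow> cfun" where "Fflow R = (\<lambda>p. R p $ 1 $ 2)"
definition Gflow :: "mfun \<Rightarrow> cfun" where "Gflow R = (\<lambda>p. R p $ 2 $ 1)"

end

theory Submission
  imports Defs "HOL-Computational_Algebra.Formal_Power_Series"
begin


definition xd :: "cfun \<Rightarrow> bool" where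
  "xd f \<longleftrightarrow> (\<forall>x t. (\<lambda>s. f (s,t)) differentiable (at x))"
definition td :: "cfun \<Rightarrow> bool" where
  "td f \<longleftrightarrow> (\<forall>x t. (\<lambda>s. f (x,s)) differentiable (at t))"

lemma xd_hvd: "xd f \<Longrightarrow> ((\<lambda>s. f (s,t)) has_vector_derivative dx f (x,t)) (at x)"
  unfolding xd_def dx_def by (simp add: vector_derivative_works[symmetric])
lemma td_hvd: "td f \<Longrightarrow> ((\<lambda>s. f (x,s)) has_vector_derivative dt f (x,t)) (at t)"
  unfolding td_def dt_def by (simp add: vector_derivative_works[symmetric])

lemma xd_I: "(\<And>x t. ((\<lambda>s. f (s,t)) has_vector_derivative D (x,t)) (at x)) \<Longrightarrow> xd f \<and> dx f = D"
proof -
  assume h: "\<And>x t. ((\<lambda>s. f (s,t)) has_vector_derivative D (x,t)) (at x)"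
  have "xd f" unfolding xd_def using h by (meson differentiableI_vector)
  moreover have "dx f = D" unfolding dx_def
    by (rule ext, clarsimp simp: vector_derivative_at[OF h])
  ultimately show ?thesis by simp
qed
lemma td_I: "(\<And>x t. ((\<lambda>s. f (x,s)) has_vector_derivative D (x,t)) (at t)) \<Longrightarrow> td f \<and> dt f = D"
proof -
  assume h: "\<And>x t. ((\<lambda>s. f (x,s)) has_vector_derivative D (x,t)) (at t)"
  have "td f" unfolding td_def using h by (meson differentiableI_vector)
  moreover have "dt f = D" unfolding dt_def
    by (rule ext, clarsimp simp: vector_derivative_at[OF h])
  ultimately show ?thesis by simp
qed

lemma dx_add: "xd f \<Longrightarrow> xd g \<Longrightarrow> xd (\<lambda>p. f p + g p) \<and> dx (\<lambda>p. f p + g p) = (\<lambda>p. dx f p + dx g p)"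
  by (rule xd_I) (intro has_vector_derivative_add xd_hvd)
lemma dt_add: "td f \<Longrightarrow> td g \<Longrightarrow> td (\<lambda>p. f p + g p) \<and> dt (\<lambda>p. f p + g p) = (\<lambda>p. dt f p + dt g p)"
  by (rule td_I) (intro has_vector_derivative_add td_hvd)
lemma dx_mult: "xd f \<Longrightarrow> xd g \<Longrightarrow> xd (\<lambda>p. f p * g p) \<and> dx (\<lambda>p. f p * g p) = (\<lambda>p. dx f p * g p + f p * dx g p)"
  apply (rule xd_I)
  subgoal for x t using has_vector_derivative_mult[OF xd_hvd[of f t x] xd_hvd[of g t x]]
    by (simp add: algebra_simps) done
lemma dt_mult: "td f \<Longrightarrow> td g \<Longrightarrow> td (\<lambda>p. f p * g p) \<and> dt (\<lambda>p. f p * g p) = (\<lambda>p. dt f p * g p + f p * dt g p)"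
  apply (rule td_I)
  subgoal for x t using has_vector_derivative_mult[OF td_hvd[of f x t] td_hvd[of g x t]]
    by (simp add: algebra_simps) done
lemma dx_cnj: "xd f \<Longrightarrow> xd (\<lambda>p. cnj (f p)) \<and> dx (\<lambda>p. cnj (f p)) = (\<lambda>p. cnj (dx f p))"
  by (rule xd_I) (intro has_vector_derivative_cnj xd_hvd)
lemma dt_cnj: "td f \<Longrightarrow> td (\<lambda>p. cnj (f p)) \<and> dt (\<lambda>p. cnj (f p)) = (\<lambda>p. cnj (dt f p))"
  by (rule td_I) (intro has_vector_derivative_cnj td_hvd)
lemma dx_const: "xd (\<lambda>p. c) \<and> dx (\<lambda>p. c) = (\<lambda>p. 0)"
  by (rule xd_I) simp
lemma dt_const: "td (\<lambda>p. c) \<and> dt (\<lambda>p. c) = (\<lambda>p. 0)"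
  by (rule td_I) simp

lemma Ck_Suc_iff: "f \<in> Ck (Suc n) \<longleftrightarrow> continuous_on UNIV f \<and> xd f \<and> td f \<and> dx f \<in> Ck n \<and> dt f \<in> Ck n"
  by (simp add: xd_def td_def)

lemma Ck_mono: "f \<in> Ck (Suc n) \<Longrightarrow> f \<in> Ck n"
proof (induction n arbitrary: f)
  case 0 then show ?case by simp
next
  case (Suc n) then show ?case unfolding Ck_Suc_iff[of _ "Suc n"] Ck_Suc_iff[of _ n] by blast
qed

lemma Ck_const_aux: "\<forall>c. (\<lambda>p. c) \<in> Ck n"
  apply (induction n) apply simp by (auto simp: Ck_Suc_iff dx_const dt_const simp del: Ck.simps)
lemma Ck_const: "(\<lambda>p. c) \<in> Ck n" using Ck_const_aux by blast

lemma Ck_add: "f \<in> Ck n \<Longrightarrow> g \<in> Ck n \<Longrightarrow> (\<lambda>p. f p + g p) \<in> Ck n"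
proof (induction n arbitrary: f g)
  case 0 then show ?case by (auto intro: continuous_on_add)
next
  case (Suc n) then show ?case unfolding Ck_Suc_iff
    using dx_add[of f g] dt_add[of f g] by (auto intro: continuous_on_add)
qed

lemma Ck_mult: "f \<in> Ck n \<Longrightarrow> g \<in> Ck n \<Longrightarrow> (\<lambda>p. f p * g p) \<in> Ck n"
proof (induction n arbitrary: f g)
  case 0 then show ?case by (auto intro: continuous_on_mult)
next
  case (Suc n)
  have m: "f \<in> Ck n" "g \<in> Ck n" using Ck_mono[OF Suc.prems(1)] Ck_mono[OF Suc.prems(2)] by blast+
  have P: "continuous_on UNIV f" "xd f" "td f" "dx f \<in> Ck n" "dt f \<in> Ck n"
          "continuous_on UNIV g" "xd g" "td g" "dx g \<in> Ck n" "dt g \<in> Ck n"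
    using Suc.prems unfolding Ck_Suc_iff by blast+
  have X: "xd (\<lambda>p. f p * g p)" "dx (\<lambda>p. f p * g p) = (\<lambda>p. dx f p * g p + f p * dx g p)"
    using dx_mult[OF P(2) P(7)] by blast+
  have T: "td (\<lambda>p. f p * g p)" "dt (\<lambda>p. f p * g p) = (\<lambda>p. dt f p * g p + f p * dt g p)"
    using dt_mult[OF P(3) P(8)] by blast+
  have C: "continuous_on UNIV (\<lambda>p. f p * g p)" using P(1) P(6) by (rule continuous_on_mult)
  have D1: "dx (\<lambda>p. f p * g p) \<in> Ck n" unfolding X(2)
    by (rule Ck_add) (rule Suc.IH; fact)+
  have D2: "dt (\<lambda>p. f p * g p) \<in> Ck n" unfolding T(2)
    by (rule Ck_add) (rule Suc.IH; fact)+
  show ?case unfolding Ck_Suc_iff using C X(1) T(1) D1 D2 by blast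
qed

lemma Ck_cnj: "f \<in> Ck n \<Longrightarrow> (\<lambda>p. cnj (f p)) \<in> Ck n"
proof (induction n arbitrary: f)
  case 0 then show ?case by (auto intro: continuous_on_cnj)
next
  case (Suc n) then show ?case unfolding Ck_Suc_iff
    using dx_cnj[of f] dt_cnj[of f] by (auto intro: continuous_on_cnj)
qed

lemma smooth_add: "smooth f \<Longrightarrow> smooth g \<Longrightarrow> smooth (\<lambda>p. f p + g p)"
  unfolding smooth_def using Ck_add by blast
lemma smooth_mult: "smooth f \<Longrightarrow> smooth g \<Longrightarrow> smooth (\<lambda>p. f p * g p)"
  unfolding smooth_def using Ck_mult by blast
lemma smooth_cnj: "smooth f \<Longrightarrow> smooth (\<lambda>p. cnj (f p))"
  unfolding smooth_def using Ck_cnj by blast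
lemma smooth_const: "smooth (\<lambda>p. c)"
  unfolding smooth_def using Ck_const by blast
lemma smooth_cmult: "smooth f \<Longrightarrow> smooth (\<lambda>p. c * f p)"
  using smooth_mult[OF smooth_const] .
lemma smooth_minus: "smooth f \<Longrightarrow> smooth (\<lambda>p. - f p)"
  using smooth_cmult[of f "-1"] by simp
lemma smooth_diff: "smooth f \<Longrightarrow> smooth g \<Longrightarrow> smooth (\<lambda>p. f p - g p)"
  using smooth_add[OF _ smooth_minus, of f g] by simp
lemma smooth_dx: "smooth f \<Longrightarrow> smooth (dx f)"
  unfolding smooth_def by (metis Ck_Suc_iff)
lemma smooth_xd: "smooth f \<Longrightarrow> xd f"
  unfolding smooth_def by (metis Ck_Suc_iff)
lemma smooth_sum: "finite I \<Longrightarrow> (\<And>i. i \<in> I \<Longrightarrow> smooth (f i)) \<Longrightarrow> smooth (\<lambda>p. \<Sum>i\<in>I. f i p)"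
  by (induction I rule: finite_induct) (auto intro: smooth_add smooth_const)

lemma dx_sum: "finite I \<Longrightarrow> (\<And>i. i \<in> I \<Longrightarrow> xd (f i)) \<Longrightarrow> dx (\<lambda>p. \<Sum>i\<in>I. f i p) = (\<lambda>p. \<Sum>i\<in>I. dx (f i) p)"
  by (rule conjunct2, rule xd_I) (intro has_vector_derivative_sum xd_hvd, auto)


lemma mat2_nth[simp]: "mat2 a b c d $ 1 $ 1 = a" "mat2 a b c d $ 1 $ 2 = b"
   "mat2 a b c d $ 2 $ 1 = c" "mat2 a b c d $ 2 $ 2 = d"
  by (simp_all add: mat2_def)

lemma mat2_ext: "(M::complex^2^2) = mat2 (M$1$1) (M$1$2) (M$2$1) (M$2$2)"
  unfolding vec_eq_iff by (simp add: forall_2)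

lemma mat2_eq_iff: "mat2 a b c d = mat2 a' b' c' d' \<longleftrightarrow> a = a' \<and> b = b' \<and> c = c' \<and> d = d'"
  by (metis mat2_nth)

lemma mat2_mult: "mat2 a b c d ** mat2 e f g h = mat2 (a*e+b*g) (a*f+b*h) (c*e+d*g) (c*f+d*h)"
  by (subst mat2_ext) (simp add: matrix_matrix_mult_def sum_2)
lemma mat2_add: "mat2 a b c d + mat2 e f g h = mat2 (a+e) (b+f) (c+g) (d+h)"
  by (subst mat2_ext) simp
lemma mat2_diff: "mat2 a b c d - mat2 e f g h = mat2 (a-e) (b-f) (c-g) (d-h)"
  by (subst mat2_ext) simp
lemma mat2_neg: "- mat2 a b c d = mat2 (-a) (-b) (-c) (-d)"
  by (subst mat2_ext) simp
lemma mat2_zero: "(0::complex^2^2) = mat2 0 0 0 0"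
  by (subst mat2_ext) simp
lemma mat2_one: "(mat 1::complex^2^2) = mat2 1 0 0 1"
  by (subst mat2_ext) (simp add: mat_def)
lemma mat2_sum: "finite I \<Longrightarrow> (\<Sum>i\<in>I. mat2 (a i) (b i) (c i) (d i)) = mat2 (\<Sum>i\<in>I. a i) (\<Sum>i\<in>I. b i) (\<Sum>i\<in>I. c i) (\<Sum>i\<in>I. d i)"
  by (induction I rule: finite_induct) (simp_all add: mat2_zero mat2_add)
lemma comm_mat2: "comm (mat2 a b c d) (mat2 e f g h) = mat2 (b*g - f*c) (a*f+b*h - (e*b+f*d)) (c*e+d*g - (g*a+h*c)) (c*f - g*b)"
  unfolding comm_def mat2_mult mat2_diff by (simp add: algebra_simps)
lemma dxM_mat2: "dxM (\<lambda>p. mat2 (a p) (b p) (c p) (d p)) p = mat2 (dx a p) (dx b p) (dx c p) (dx d p)"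
  unfolding dxM_def by (subst mat2_ext) simp


definition step :: "cfun \<Rightarrow> cfun \<Rightarrow> cfun \<Rightarrow> (nat \<Rightarrow> cfun \<times> cfun \<times> cfun) \<Rightarrow> nat \<Rightarrow> cfun \<times> cfun \<times> cfun" where
  "step pp q r G N = (if N = 0 then ((\<lambda>_. \<i>), (\<lambda>_. 0), (\<lambda>_. 0)) else if N = 1 then ((\<lambda>_. 0), q, r) else
  ((\<lambda>x. \<i>/2 * (\<Sum>k\<in>{1..N - 1}. fst (G k) x * fst (G (N - k)) x
        + fst (snd (G k)) x * snd (snd (G (N - k))) x)),
   (\<lambda>x. \<i>/2 * (dx (fst (snd (G (N - 2)))) x - 2 * q x * fst (G (N - 1)) x
        + 2 * pp x * fst (snd (G (N - 2))) x)),
   (\<lambda>x. -\<i>/2 * (dx (snd (snd (G (N - 2)))) x + 2 * r x * fst (G (N - 1)) x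
        - 2 * pp x * snd (snd (G (N - 2))) x))))"

primrec tab :: "cfun \<Rightarrow> cfun \<Rightarrow> cfun \<Rightarrow> nat \<Rightarrow> nat \<Rightarrow> cfun \<times> cfun \<times> cfun" where
  "tab pp q r 0 = (\<lambda>_. ((\<lambda>_. 0), (\<lambda>_. 0), (\<lambda>_. 0)))"
| "tab pp q r (Suc N) = (tab pp q r N)(N := step pp q r (tab pp q r N) N)"

definition seq :: "cfun \<Rightarrow> cfun \<Rightarrow> cfun \<Rightarrow> nat \<Rightarrow> cfun \<times> cfun \<times> cfun" where
  "seq pp q r m = tab pp q r (Suc m) m"

lemma tab_seq: "k < N \<Longrightarrow> tab pp q r N k = seq pp q r k"
  by (induction N) (auto simp: seq_def less_Suc_eq)

lemma seq_0: "seq pp q r 0 = ((\<lambda>_. \<i>), (\<lambda>_. 0), (\<lambda>_. 0))" by (simp add: seq_def step_def)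
lemma seq_1: "seq pp q r (Suc 0) = ((\<lambda>_. 0), q, r)" by (simp add: seq_def step_def)
lemma seq_SS: "seq pp q r (Suc (Suc m)) =
  ((\<lambda>x. \<i>/2 * (\<Sum>k\<in>{1..Suc m}. fst (seq pp q r k) x * fst (seq pp q r (Suc (Suc m) - k)) x
        + fst (snd (seq pp q r k)) x * snd (snd (seq pp q r (Suc (Suc m) - k))) x)),
   (\<lambda>x. \<i>/2 * (dx (fst (snd (seq pp q r m))) x - 2 * q x * fst (seq pp q r (Suc m)) x
        + 2 * pp x * fst (snd (seq pp q r m)) x)),
   (\<lambda>x. -\<i>/2 * (dx (snd (snd (seq pp q r m))) x + 2 * r x * fst (seq pp q r (Suc m)) x
        - 2 * pp x * snd (snd (seq pp q r m)) x)))"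
proof -
  have s: "seq pp q r (Suc (Suc m)) = step pp q r (tab pp q r (Suc (Suc m))) (Suc (Suc m))"
    by (simp only: seq_def tab.simps fun_upd_same)
  have e: "\<And>k. k \<in> {1..Suc m} \<Longrightarrow> tab pp q r (Suc (Suc m)) k = seq pp q r k \<and> tab pp q r (Suc (Suc m)) (Suc (Suc m) - k) = seq pp q r (Suc (Suc m) - k)"
    by (intro conjI tab_seq) auto
  have e2: "tab pp q r (Suc (Suc m)) m = seq pp q r m" "tab pp q r (Suc (Suc m)) (Suc m) = seq pp q r (Suc m)"
    by (rule tab_seq, simp)+
  have sumeq: "\<And>x. (\<Sum>k\<in>{1..Suc m}. fst (tab pp q r (Suc (Suc m)) k) x * fst (tab pp q r (Suc (Suc m)) (Suc (Suc m) - k)) x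
        + fst (snd (tab pp q r (Suc (Suc m)) k)) x * snd (snd (tab pp q r (Suc (Suc m)) (Suc (Suc m) - k))) x)
     = (\<Sum>k\<in>{1..Suc m}. fst (seq pp q r k) x * fst (seq pp q r (Suc (Suc m) - k)) x
        + fst (snd (seq pp q r k)) x * snd (snd (seq pp q r (Suc (Suc m) - k))) x)"
    by (rule sum.cong[OF refl]) (metis e)
  have st: "step pp q r G (Suc (Suc m)) = ((\<lambda>x. \<i>/2 * (\<Sum>k\<in>{1..Suc m}. fst (G k) x * fst (G (Suc (Suc m) - k)) x
        + fst (snd (G k)) x * snd (snd (G (Suc (Suc m) - k))) x)),
   (\<lambda>x. \<i>/2 * (dx (fst (snd (G m))) x - 2 * q x * fst (G (Suc m)) x
        + 2 * pp x * fst (snd (G m)) x)),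
   (\<lambda>x. -\<i>/2 * (dx (snd (snd (G m))) x + 2 * r x * fst (G (Suc m)) x
        - 2 * pp x * snd (snd (G m)) x)))" for G
    unfolding step_def by simp
  show ?thesis unfolding s st e2 sumeq by (rule refl)
qed

lemmas seq_simps = seq_0 seq_1 seq_SS

definition "dS pp q r m = fst (seq pp q r m)"
definition "bS pp q r m = fst (snd (seq pp q r m))"
definition "cS pp q r m = snd (snd (seq pp q r m))"

lemma dS_simps: "dS pp q r 0 = (\<lambda>_. \<i>)" "dS pp q r (Suc 0) = (\<lambda>_. 0)"
  "dS pp q r (Suc (Suc m)) = (\<lambda>x. \<i>/2 * (\<Sum>k\<in>{1..Suc m}. dS pp q r k x * dS pp q r (Suc (Suc m) - k) x
        + bS pp q r k x * cS pp q r (Suc (Suc m) - k) x))"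
  by (simp_all add: dS_def bS_def cS_def seq_simps)
lemma bS_simps: "bS pp q r 0 = (\<lambda>_. 0)" "bS pp q r (Suc 0) = q"
  "bS pp q r (Suc (Suc m)) = (\<lambda>x. \<i>/2 * (dx (bS pp q r m) x - 2 * q x * dS pp q r (Suc m) x
        + 2 * pp x * bS pp q r m x))"
  by (simp_all add: dS_def bS_def cS_def seq_simps)
lemma cS_simps: "cS pp q r 0 = (\<lambda>_. 0)" "cS pp q r (Suc 0) = r"
  "cS pp q r (Suc (Suc m)) = (\<lambda>x. -\<i>/2 * (dx (cS pp q r m) x + 2 * r x * dS pp q r (Suc m) x
        - 2 * pp x * cS pp q r m x))"
  by (simp_all add: dS_def bS_def cS_def seq_simps)

lemma nat_cases3: obtains "m = 0" | "m = Suc 0" | m' where "m = Suc (Suc m')"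
  by (metis not0_implies_Suc)

lemma parity: "(odd m \<longrightarrow> dS pp q r m = (\<lambda>_. 0)) \<and> (even m \<longrightarrow> bS pp q r m = (\<lambda>_. 0) \<and> cS pp q r m = (\<lambda>_. 0))"
proof (induction m rule: less_induct)
  case (less m)
  show ?case
  proof (cases m rule: nat_cases3)
    case 1 then show ?thesis by (simp add: dS_simps bS_simps cS_simps)
  next
    case 2 then show ?thesis by (simp add: dS_simps bS_simps cS_simps)
  next
    case (3 m')
    have A: "odd m \<Longrightarrow> dS pp q r m = (\<lambda>_. 0)"
    proof -
      assume om: "odd m"
      have "\<And>x k. k \<in> {1..Suc m'} \<Longrightarrow> dS pp q r k x * dS pp q r (Suc (Suc m') - k) x
        + bS pp q r k x * cS pp q r (Suc (Suc m') - k) x = 0"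
      proof -
        fix x k assume k: "k \<in> {1..Suc m'}"
        have l1: "k < m" "Suc (Suc m') - k < m" using k 3 by auto
        show "dS pp q r k x * dS pp q r (Suc (Suc m') - k) x
          + bS pp q r k x * cS pp q r (Suc (Suc m') - k) x = 0"
        proof (cases "odd k")
          case True
          then have "even (Suc (Suc m') - k)" using om 3 k by auto
          then show ?thesis using less.IH[OF l1(1)] less.IH[OF l1(2)] True by simp
        next
          case False
          then have "odd (Suc (Suc m') - k)" using om 3 k by auto
          then show ?thesis using less.IH[OF l1(1)] less.IH[OF l1(2)] False by simp
        qed
      qed
      then show ?thesis using 3 by (simp add: dS_simps)
    qed
    have B: "even m \<Longrightarrow> bS pp q r m = (\<lambda>_. 0) \<and> cS pp q r m = (\<lambda>_. 0)"
    proof -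
      assume em: "even m"
      have "bS pp q r m' = (\<lambda>_. 0)" "cS pp q r m' = (\<lambda>_. 0)" "dS pp q r (Suc m') = (\<lambda>_. 0)"
        using less.IH[of m'] less.IH[of "Suc m'"] em 3 by auto
      then show ?thesis using 3 by (simp add: bS_simps cS_simps dx_const)
    qed
    show ?thesis using A B by blast
  qed
qed

lemmas smooth_intros = smooth_add smooth_mult smooth_cnj smooth_const smooth_minus smooth_diff smooth_dx smooth_sum

lemma smooth_seq:
  assumes "smooth pp" "smooth q" "smooth r"
  shows "smooth (dS pp q r m) \<and> smooth (bS pp q r m) \<and> smooth (cS pp q r m)"
proof (induction m rule: less_induct)
  case (less m)
  show ?case
  proof (cases m rule: nat_cases3)
    case 1 then show ?thesis by (simp add: dS_simps bS_simps cS_simps smooth_const)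
  next
    case 2 then show ?thesis using assms by (simp add: dS_simps bS_simps cS_simps smooth_const)
  next
    case (3 m')
    have ih: "smooth (dS pp q r k) \<and> smooth (bS pp q r k) \<and> smooth (cS pp q r k)" if "k < m" for k
      using less.IH that by blast
    have s1: "smooth (dS pp q r m)" unfolding 3 dS_simps
      apply (intro smooth_intros) using ih 3 by auto
    have s2: "smooth (bS pp q r m)" unfolding 3 bS_simps
      apply (intro smooth_intros) using ih 3 assms by auto
    have s3: "smooth (cS pp q r m)" unfolding 3 cS_simps
      apply (intro smooth_intros) using ih 3 assms by auto
    show ?thesis using s1 s2 s3 by blast
  qed
qed

lemma b_rec: "dx (bS pp q r m) x = -2*\<i> * bS pp q r (Suc (Suc m)) x + 2 * q x * dS pp q r (Suc m) x - 2 * pp x * bS pp q r m x"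
  by (simp add: bS_simps algebra_simps)
lemma c_rec: "dx (cS pp q r m) x = 2*\<i> * cS pp q r (Suc (Suc m)) x - 2 * r x * dS pp q r (Suc m) x + 2 * pp x * cS pp q r m x"
  by (simp add: cS_simps algebra_simps)


no_notation fps_nth (infixl "$" 75)
notation fps_nth (infixl "$$" 75)


definition fpsF :: "(nat \<Rightarrow> cfun) \<Rightarrow> real \<times> real \<Rightarrow> complex fps" where
  "fpsF F x = Abs_fps (\<lambda>m. F m x)"

lemma fpsF_nth[simp]: "fpsF F x $$ m = F m x"
  by (simp add: fpsF_def)

lemma xd_fps_mult: assumes "\<And>m. xd (F m)" "\<And>m. xd (G m)"
  shows "xd (\<lambda>p. (fpsF F p * fpsF G p) $$ n)
    \<and> dx (\<lambda>p. (fpsF F p * fpsF G p) $$ n) x = (fpsF (\<lambda>m. dx (F m)) x * fpsF G x + fpsF F x * fpsF (\<lambda>m. dx (G m)) x) $$ n"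
proof -
  have t: "((\<lambda>s. F i (s,t) * G (n-i) (s,t)) has_vector_derivative (dx (F i) (y,t) * G (n-i) (y,t) + F i (y,t) * dx (G (n-i)) (y,t))) (at y)" for i y t
    using has_vector_derivative_mult[OF xd_hvd[OF assms(1)[of i]] xd_hvd[OF assms(2)[of "n-i"]]] by (simp add: add.commute)
  have "((\<lambda>s. \<Sum>i=0..n. F i (s,t) * G (n-i) (s,t)) has_vector_derivative (\<Sum>i=0..n. dx (F i) (y,t) * G (n-i) (y,t) + F i (y,t) * dx (G (n-i)) (y,t))) (at y)" for y t
    by (rule has_vector_derivative_sum) (rule t)
  then have "((\<lambda>s. (fpsF F (s,t) * fpsF G (s,t)) $$ n) has_vector_derivative
      (fpsF (\<lambda>m. dx (F m)) (y,t) * fpsF G (y,t) + fpsF F (y,t) * fpsF (\<lambda>m. dx (G m)) (y,t)) $$ n) (at y)" for y t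
    by (simp add: fps_mult_nth sum.distrib)
  from xd_I[of _ "\<lambda>p. (fpsF (\<lambda>m. dx (F m)) p * fpsF G p + fpsF F p * fpsF (\<lambda>m. dx (G m)) p) $$ n", OF this]
  show ?thesis by simp
qed

context
  fixes pp q r :: cfun
  assumes sm: "smooth pp" "smooth q" "smooth r"
begin

abbreviation "d \<equiv> dS pp q r"
abbreviation "b \<equiv> bS pp q r"
abbreviation "c \<equiv> cS pp q r"

lemma xd_all: "xd (d m)" "xd (b m)" "xd (c m)"
  using smooth_seq[OF sm] smooth_xd by blast+

lemma sum_split_ends: "(\<Sum>i=0..Suc (Suc m). f i) = f 0 + (\<Sum>i=1..Suc m. f i) + f (Suc (Suc m))"
  by (simp add: sum.atLeast0_atMost_Suc sum.atLeast_Suc_atMost ac_simps)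

lemma sq_rel: "fpsF d x * fpsF d x + fpsF b x * fpsF c x = -1"
proof (rule fps_ext)
  fix n
  show "(fpsF d x * fpsF d x + fpsF b x * fpsF c x) $$ n = (-1::complex fps) $$ n"
  proof (cases n rule: nat_cases3)
    case 1 then show ?thesis by (simp add: dS_simps bS_simps cS_simps fps_mult_nth)
  next
    case 2 then show ?thesis by (simp add: dS_simps bS_simps cS_simps fps_mult_nth)
  next
    case (3 m)
    have "(fpsF d x * fpsF d x + fpsF b x * fpsF c x) $$ n
      = (\<Sum>i=0..n. d i x * d (n-i) x + b i x * c (n-i) x)"
      by (simp add: fps_mult_nth sum.distrib)
    also have "\<dots> = 2 * \<i> * d n x + (\<Sum>i=1..Suc m. d i x * d (n-i) x + b i x * c (n-i) x)"
      unfolding 3 sum_split_ends by (simp add: dS_simps(1) bS_simps(1) cS_simps(1))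
    also have "\<dots> = 0" unfolding 3 dS_simps(3) by (simp add: algebra_simps)
    finally show ?thesis using 3 by simp
  qed
qed

lemma b_fps: "fps_X^2 * fpsF (\<lambda>m. dx (b m)) x = - (2 * fps_const \<i>) * fpsF b x
   + 2 * fps_const (q x) * (fps_X * fpsF d x) - 2 * fps_const (pp x) * (fps_X^2 * fpsF b x)"
proof (rule fps_ext)
  fix n
  show "(fps_X^2 * fpsF (\<lambda>m. dx (b m)) x) $$ n = (- (2 * fps_const \<i>) * fpsF b x
   + 2 * fps_const (q x) * (fps_X * fpsF d x) - 2 * fps_const (pp x) * (fps_X^2 * fpsF b x)) $$ n"
  proof (cases n rule: nat_cases3)
    case 1 then show ?thesis by (simp add: dS_simps bS_simps fps_X_power_mult_nth)
  next
    case 2 then show ?thesis by (simp add: dS_simps bS_simps fps_X_power_mult_nth fps_X_mult_nth)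
  next
    case (3 m)
    then show ?thesis by (simp add: fps_X_power_mult_nth fps_X_mult_nth b_rec algebra_simps)
  qed
qed

lemma c_fps: "fps_X^2 * fpsF (\<lambda>m. dx (c m)) x = (2 * fps_const \<i>) * fpsF c x
   - 2 * fps_const (r x) * (fps_X * fpsF d x) + 2 * fps_const (pp x) * (fps_X^2 * fpsF c x)"
proof (rule fps_ext)
  fix n
  show "(fps_X^2 * fpsF (\<lambda>m. dx (c m)) x) $$ n = ((2 * fps_const \<i>) * fpsF c x
   - 2 * fps_const (r x) * (fps_X * fpsF d x) + 2 * fps_const (pp x) * (fps_X^2 * fpsF c x)) $$ n"
  proof (cases n rule: nat_cases3)
    case 1 then show ?thesis by (simp add: dS_simps cS_simps fps_X_power_mult_nth)
  next
    case 2 then show ?thesis by (simp add: dS_simps cS_simps fps_X_power_mult_nth fps_X_mult_nth)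
  next
    case (3 m)
    then show ?thesis by (simp add: fps_X_power_mult_nth fps_X_mult_nth c_rec algebra_simps)
  qed
qed

lemma deriv_sq: "fpsF (\<lambda>m. dx (d m)) x * fpsF d x + fpsF d x * fpsF (\<lambda>m. dx (d m)) x
   + (fpsF (\<lambda>m. dx (b m)) x * fpsF c x + fpsF b x * fpsF (\<lambda>m. dx (c m)) x) = 0"
proof (rule fps_ext)
  fix n
  have e1: "(fpsF d p * fpsF d p) $$ n + (fpsF b p * fpsF c p) $$ n = (if n = 0 then -1 else 0)" for p
  proof -
    have "(fpsF d p * fpsF d p + fpsF b p * fpsF c p) $$ n = (-1::complex fps) $$ n" using sq_rel by simp
    then show ?thesis by simp
  qed
  note h1 = xd_fps_mult[of d d, OF xd_all(1) xd_all(1)]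
  note h2 = xd_fps_mult[of b c, OF xd_all(2) xd_all(3)]
  have "dx (\<lambda>p. (fpsF d p * fpsF d p) $$ n + (fpsF b p * fpsF c p) $$ n) x = 0"
    by (simp only: e1 dx_const)
  then show "(fpsF (\<lambda>m. dx (d m)) x * fpsF d x + fpsF d x * fpsF (\<lambda>m. dx (d m)) x
   + (fpsF (\<lambda>m. dx (b m)) x * fpsF c x + fpsF b x * fpsF (\<lambda>m. dx (c m)) x)) $$ n = (0::complex fps) $$ n"
    using dx_add[OF conjunct1[OF h1] conjunct1[OF h2]] h1 h2 by simp
qed

lemma d_rel_fps: "fps_X * fpsF (\<lambda>m. dx (d m)) x + fps_const (q x) * fpsF c x - fps_const (r x) * fpsF b x = 0"
proof -
  define D where "D = fpsF d x"
  define B where "B = fpsF b x"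
  define C where "C = fpsF c x"
  define D' where "D' = fpsF (\<lambda>m. dx (d m)) x"
  define B' where "B' = fpsF (\<lambda>m. dx (b m)) x"
  define C' where "C' = fpsF (\<lambda>m. dx (c m)) x"
  have E: "D'*D + D*D' + (B'*C + B*C') = 0" using deriv_sq unfolding D_def B_def C_def D'_def B'_def C'_def .
  have ii: "fps_X^2 * B' = - (2 * fps_const \<i>) * B + 2 * fps_const (q x) * (fps_X * D) - 2 * fps_const (pp x) * (fps_X^2 * B)"
    using b_fps unfolding D_def B_def C_def D'_def B'_def C'_def .
  have iii: "fps_X^2 * C' = (2 * fps_const \<i>) * C - 2 * fps_const (r x) * (fps_X * D) + 2 * fps_const (pp x) * (fps_X^2 * C)"
    using c_fps unfolding D_def B_def C_def D'_def B'_def C'_def .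
  have "0 = fps_X^2 * (D'*D + D*D' + (B'*C + B*C'))" using E by simp
  also have "\<dots> = 2 * fps_X * D * (fps_X * D') + (fps_X^2 * B') * C + B * (fps_X^2 * C')"
    by (simp add: algebra_simps power2_eq_square)
  also have "\<dots> = 2 * fps_X * D * (fps_X * D' + fps_const (q x) * C - fps_const (r x) * B)"
    unfolding ii iii by (simp add: algebra_simps power2_eq_square)
  finally have z: "2 * fps_X * D * (fps_X * D' + fps_const (q x) * C - fps_const (r x) * B) = 0" by simp
  have "D \<noteq> 0" proof
    assume "D = 0" then have "D $$ 0 = 0" by simp
    then show False by (simp add: D_def dS_simps)
  qed
  moreover have "(2::complex fps) * fps_X \<noteq> 0" by (metis fps_X_neq_zero mult_eq_0_iff zero_neq_numeral)
  ultimately show ?thesis using z unfolding D_def B_def C_def D'_def by (simp add: mult.assoc)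
qed

lemma d_rel: "dx (d m) x = r x * b (Suc m) x - q x * c (Suc m) x"
proof -
  have "(fps_X * fpsF (\<lambda>m. dx (d m)) x + fps_const (q x) * fpsF c x - fps_const (r x) * fpsF b x) $$ Suc m = 0"
    using d_rel_fps by simp
  then show ?thesis by (simp add: fps_X_mult_nth algebra_simps)
qed

end


definition lift :: "(nat \<Rightarrow> cfun) \<Rightarrow> int \<Rightarrow> cfun" where
  "lift F k p = (if k \<le> 2 then F (nat (2 - k)) p else 0)"

lemma lift_fun: "lift F k = (if k \<le> 2 then F (nat (2 - k)) else (\<lambda>_. 0))"
  by (auto simp: lift_def)

lemma conv: "(\<Sum>i\<in>{n-2..2}. lift F i p * lift G (n-i) p) = (if n \<le> 4 then (fpsF F p * fpsF G p) $$ nat (4 - n) else 0)"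
proof (cases "n \<le> 4")
  case False then show ?thesis by simp
next
  case True
  have "(fpsF F p * fpsF G p) $$ nat (4-n) = (\<Sum>k=0..nat(4-n). F k p * G (nat(4-n) - k) p)"
    by (simp add: fps_mult_nth)
  also have "\<dots> = (\<Sum>i\<in>{n-2..2}. lift F i p * lift G (n-i) p)"
  proof (rule sum.reindex_bij_witness[of _ "\<lambda>i. nat (2 - i)" "\<lambda>k. 2 - int k"])
    fix k assume k: "k \<in> {0..nat (4 - n)}"
    have e: "nat (2 - (n - (2 - int k))) = nat (4 - n) - k" using k True by auto
    have l: "n - (2 - int k) \<le> 2" using k True by auto
    show "lift F (2 - int k) p * lift G (n - (2 - int k)) p = F k p * G (nat (4 - n) - k) p"
      using l e by (simp add: lift_def)
  qed (use True in auto)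
  finally show ?thesis using True by simp
qed

definition Qc :: "cfun \<Rightarrow> cfun \<Rightarrow> cfun \<Rightarrow> int \<Rightarrow> mfun" where
  "Qc pp q r k = (\<lambda>p. mat2 (lift (dS pp q r) k p) (lift (bS pp q r) k p) (lift (cS pp q r) k p) (- lift (dS pp q r) k p))"

lemma dx_minus: "xd f \<Longrightarrow> dx (\<lambda>p. - f p) = (\<lambda>p. - dx f p)"
  by (rule conjunct2, rule xd_I) (intro has_vector_derivative_minus xd_hvd)

context
  fixes pp q r :: cfun
  assumes sm: "smooth pp" "smooth q" "smooth r"
begin

lemma smooth_lift: "smooth (lift (dS pp q r) k)" "smooth (lift (bS pp q r) k)" "smooth (lift (cS pp q r) k)"
  using smooth_seq[OF sm] by (auto simp: lift_fun smooth_const)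

lemma nat_m: "n \<le> 2 \<Longrightarrow> nat (2 - (n - 1)) = Suc (nat (2 - n)) \<and> nat (2 - (n - 2)) = Suc (Suc (nat (2 - n)))"
  by arith

lemma F11: "dx (lift (dS pp q r) n) p = r p * lift (bS pp q r) (n-1) p - q p * lift (cS pp q r) (n-1) p"
proof -
  consider "n \<le> 2" | "n = 3" | "n \<ge> 4" by arith
  then show ?thesis
  proof cases
    case 1
    then show ?thesis using d_rel[OF sm, of "nat (2-n)" p] nat_m[OF 1] by (simp add: lift_fun lift_def)
  next
    case 2 then show ?thesis by (simp add: lift_fun lift_def dx_const bS_simps cS_simps)
  next
    case 3 then show ?thesis by (simp add: lift_fun lift_def dx_const)
  qed
qed

lemma F12: "dx (lift (bS pp q r) n) p = -2*\<i> * lift (bS pp q r) (n-2) p + 2 * q p * lift (dS pp q r) (n-1) p - 2 * pp p * lift (bS pp q r) n p"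
proof -
  consider "n \<le> 2" | "n = 3" | "n = 4" | "n \<ge> 5" by arith
  then show ?thesis
  proof cases
    case 1
    then show ?thesis using b_rec[of pp q r "nat (2-n)" p] nat_m[OF 1] by (simp add: lift_fun lift_def)
  next
    case 2 then show ?thesis by (simp add: lift_fun lift_def dx_const bS_simps dS_simps)
  next
    case 3 then show ?thesis by (simp add: lift_fun lift_def dx_const bS_simps dS_simps)
  next
    case 4 then show ?thesis by (simp add: lift_fun lift_def dx_const)
  qed
qed

lemma F21: "dx (lift (cS pp q r) n) p = 2*\<i> * lift (cS pp q r) (n-2) p - 2 * r p * lift (dS pp q r) (n-1) p + 2 * pp p * lift (cS pp q r) n p"
proof -
  consider "n \<le> 2" | "n = 3" | "n = 4" | "n \<ge> 5" by arith
  then show ?thesis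
  proof cases
    case 1
    then show ?thesis using c_rec[of pp q r "nat (2-n)" p] nat_m[OF 1] by (simp add: lift_fun lift_def)
  next
    case 2 then show ?thesis by (simp add: lift_fun lift_def dx_const cS_simps dS_simps)
  next
    case 3 then show ?thesis by (simp add: lift_fun lift_def dx_const cS_simps dS_simps)
  next
    case 4 then show ?thesis by (simp add: lift_fun lift_def dx_const)
  qed
qed

lemma par_lift: "even k \<Longrightarrow> lift (bS pp q r) k p = 0 \<and> lift (cS pp q r) k p = 0"
   "odd k \<Longrightarrow> lift (dS pp q r) k p = 0"
proof -
  assume "even k"
  then have "k \<le> 2 \<Longrightarrow> even (nat (2 - k))" by (simp add: even_nat_iff)
  then show "lift (bS pp q r) k p = 0 \<and> lift (cS pp q r) k p = 0"
    using parity[of "nat (2-k)" pp q r] by (auto simp: lift_def)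
next
  assume "odd k"
  then have "k \<le> 2 \<Longrightarrow> odd (nat (2 - k))" by (simp add: even_nat_iff)
  then show "lift (dS pp q r) k p = 0"
    using parity[of "nat (2-k)" pp q r] by (auto simp: lift_def)
qed

lemma Qc_is: "is_Qseries (\<lambda>x. mat2 (pp x) 0 0 (- pp x)) q r (Qc pp q r)"
  unfolding is_Qseries_def
proof (intro conjI allI impI)
  fix k :: int assume "k > 2"
  then show "Qc pp q r k = (\<lambda>p. 0)" by (simp add: Qc_def lift_def mat2_zero)
next
  show "Qc pp q r 2 = (\<lambda>p. amat)" by (simp add: Qc_def lift_def amat_def dS_simps bS_simps cS_simps)
next
  show "Qc pp q r 1 = umat q r" by (simp add: Qc_def lift_def umat_def dS_simps bS_simps cS_simps)
next
  fix k p show "traceless (Qc pp q r k p)" by (simp add: Qc_def traceless_def)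
next
  fix k :: int and p assume "even k" then show "is_diag (Qc pp q r k p)"
    using par_lift(1) by (simp add: Qc_def is_diag_def)
next
  fix k :: int and p assume "odd k" then show "is_offdiag (Qc pp q r k p)"
    using par_lift(2) by (simp add: Qc_def is_offdiag_def)
next
  fix k :: int and i j :: 2
  show "smooth (\<lambda>p. Qc pp q r k p $ i $ j)"
    using exhaust_2[of i] exhaust_2[of j] smooth_lift smooth_minus[OF smooth_lift(1)]
    by (auto simp: Qc_def)
next
  fix n :: int and p
  have xdd: "xd (lift (dS pp q r) n)" using smooth_lift smooth_xd by blast
  show "dxM (Qc pp q r n) p + comm amat (Qc pp q r (n - 2) p) + comm (umat q r p) (Qc pp q r (n - 1) p) +
          comm (mat2 (pp p) 0 0 (- pp p)) (Qc pp q r n p) = 0"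
    unfolding Qc_def dxM_mat2 dx_minus[OF xdd] amat_def umat_def comm_mat2 mat2_add mat2_zero mat2_eq_iff
    by (simp add: F11 F12 F21 algebra_simps)
next
  fix n :: int and p
  have e1: "(\<Sum>i\<in>{n-2..2}. lift F i p * lift G (n-i) p + lift H i p * lift K (n-i) p)
    = (if n \<le> 4 then (fpsF F p * fpsF G p + fpsF H p * fpsF K p) $$ nat (4 - n) else 0)" for F G H K
    by (simp add: sum.distrib conv)
  have e2: "(\<Sum>i\<in>{n-2..2}. lift F i p * lift G (n-i) p - lift G i p * lift F (n-i) p) = 0" for F G
    by (simp add: sum_subtractf conv mult.commute)
  have sq: "(fpsF (dS pp q r) p * fpsF (dS pp q r) p) $$ nat (4 - n) + (fpsF (bS pp q r) p * fpsF (cS pp q r) p) $$ nat (4 - n)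
     = (if n = 4 then -1 else 0)" if "n \<le> 4"
  proof -
    have "(fpsF (dS pp q r) p * fpsF (dS pp q r) p + fpsF (bS pp q r) p * fpsF (cS pp q r) p) $$ nat (4 - n) = (-1 :: complex fps) $$ nat (4 - n)"
      using sq_rel[OF sm, of p] by simp
    then show ?thesis using that by (simp split: if_splits)
  qed
  have sq2: "(fpsF (cS pp q r) p * fpsF (bS pp q r) p) $$ nat (4 - n) + (fpsF (dS pp q r) p * fpsF (dS pp q r) p) $$ nat (4 - n)
     = (if n = 4 then -1 else 0)" if "n \<le> 4"
    using sq[OF that] by (simp add: mult.commute add.commute)
  have n4: "n \<noteq> 4 \<Longrightarrow> n \<le> 4 \<Longrightarrow> (fpsF (dS pp q r) p * fpsF (dS pp q r) p) $$ nat (4 - n) + (fpsF (bS pp q r) p * fpsF (cS pp q r) p) $$ nat (4 - n) = 0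
     \<and> (fpsF (cS pp q r) p * fpsF (bS pp q r) p) $$ nat (4 - n) + (fpsF (dS pp q r) p * fpsF (dS pp q r) p) $$ nat (4 - n) = 0"
    using sq sq2 by simp
  show "(\<Sum>i\<in>{n - 2..2}. Qc pp q r i p ** Qc pp q r (n - i) p) = (if n = 4 then - mat 1 else 0)"
    unfolding Qc_def mat2_mult mat2_sum[OF finite_atLeastAtMost_int]
    apply (simp only: mult_minus_left mult_minus_right)
    apply (simp only: diff_conv_add_uminus[symmetric] add.commute[of "- _" "_"])
    apply (simp add: e1 e2 n4 mat2_one mat2_neg mat2_zero dS_simps(1) bS_simps(1) cS_simps(1))
    done
qed

end


lemma int_split_range: "(k::int) \<le> 0 \<Longrightarrow> {k..2} = insert k (insert 2 {k+1..1})" by auto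

lemma Qseries_unique:
  assumes A: "is_Qseries P q r Q1" and B: "is_Qseries P q r Q2"
  shows "Q1 = Q2"
proof -
  have A0: "\<forall>k>2. Q1 k = (\<lambda>p. 0)" and A2: "Q1 2 = (\<lambda>p. amat)" and A1: "Q1 1 = umat q r"
    and Ad: "\<forall>k p. even k \<longrightarrow> is_diag (Q1 k p)" and Ao: "\<forall>k p. odd k \<longrightarrow> is_offdiag (Q1 k p)"
    and Af: "\<forall>n p. dxM (Q1 n) p + comm amat (Q1 (n-2) p) + comm (umat q r p) (Q1 (n-1) p) + comm (P p) (Q1 n p) = 0"
    and As: "\<forall>n p. (\<Sum>i\<in>{n-2..2}. Q1 i p ** Q1 (n-i) p) = (if n = 4 then - mat 1 else 0)"
    using A unfolding is_Qseries_def by blast+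
  have B0: "\<forall>k>2. Q2 k = (\<lambda>p. 0)" and B2: "Q2 2 = (\<lambda>p. amat)" and B1: "Q2 1 = umat q r"
    and Bd: "\<forall>k p. even k \<longrightarrow> is_diag (Q2 k p)" and Bo: "\<forall>k p. odd k \<longrightarrow> is_offdiag (Q2 k p)"
    and Bf: "\<forall>n p. dxM (Q2 n) p + comm amat (Q2 (n-2) p) + comm (umat q r p) (Q2 (n-1) p) + comm (P p) (Q2 n p) = 0"
    and Bs: "\<forall>n p. (\<Sum>i\<in>{n-2..2}. Q2 i p ** Q2 (n-i) p) = (if n = 4 then - mat 1 else 0)"
    using B unfolding is_Qseries_def by blast+
  have main: "\<forall>k. k \<ge> 2 - int m \<longrightarrow> Q1 k = Q2 k" for m
  proof (induction m)
    case 0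
    show ?case
    proof (intro allI impI)
      fix k :: int assume "k \<ge> 2 - int 0"
      then consider "k = 2" | "k > 2" by arith
      then show "Q1 k = Q2 k" using A0 B0 A2 B2 by cases auto
    qed
  next
    case (Suc m)
    show ?case
    proof (intro allI impI)
      fix k :: int assume k: "k \<ge> 2 - int (Suc m)"
      show "Q1 k = Q2 k"
      proof (cases "k \<ge> 2 - int m")
        case True then show ?thesis using Suc.IH by blast
      next
        case False
        then have kk: "k = 1 - int m" using k by simp
        show ?thesis
        proof (cases "m = 0")
          case True then show ?thesis using kk A1 B1 by simp
        next
          case False
          then have k0: "k \<le> 0" using kk by simp
          have ih: "\<And>j. j \<ge> k + 1 \<Longrightarrow> Q1 j = Q2 j" using Suc.IH kk by auto
          show ?thesis
          proof (cases "odd k")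
            case True
            show ?thesis
            proof
              fix p
              have f1: "dxM (Q1 (k+2)) p + comm amat (Q1 k p) + comm (umat q r p) (Q1 (k+1) p) + comm (P p) (Q1 (k+2) p) = 0"
                using Af[rule_format, of "k+2" p] by (simp add: ac_simps)
              have f2: "dxM (Q1 (k+2)) p + comm amat (Q2 k p) + comm (umat q r p) (Q1 (k+1) p) + comm (P p) (Q1 (k+2) p) = 0"
                using Bf[rule_format, of "k+2" p] ih[of "k+1"] ih[of "k+2"] by (simp add: ac_simps)
              have c: "comm amat (Q1 k p) = comm amat (Q2 k p)" using f1 f2 by (metis add_right_cancel add_left_cancel)
              have "is_offdiag (Q1 k p)" using Ao True by blast
              then have od: "Q1 k p $ 1 $ 1 = 0" "Q1 k p $ 2 $ 2 = 0" by (simp_all add: is_offdiag_def)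
              have o1: "Q1 k p = mat2 0 (Q1 k p $ 1 $ 2) (Q1 k p $ 2 $ 1) 0"
                using mat2_ext[of "Q1 k p"] unfolding od .
              have "is_offdiag (Q2 k p)" using Bo True by blast
              then have od: "Q2 k p $ 1 $ 1 = 0" "Q2 k p $ 2 $ 2 = 0" by (simp_all add: is_offdiag_def)
              have o2: "Q2 k p = mat2 0 (Q2 k p $ 1 $ 2) (Q2 k p $ 2 $ 1) 0"
                using mat2_ext[of "Q2 k p"] unfolding od .
              have "mat2 0 (Q1 k p $ 1 $ 2) (Q1 k p $ 2 $ 1) 0 = mat2 0 (Q2 k p $ 1 $ 2) (Q2 k p $ 2 $ 1) 0"
                using c unfolding amat_def by (subst (asm) o1, subst (asm) o2) (simp add: comm_mat2 mat2_eq_iff)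
              then show "Q1 k p = Q2 k p" using o1 o2 by simp
            qed
          next
            case False
            show ?thesis
            proof
              fix p
              have fin: "finite {k+1..1}" by simp
              have nk: "k \<notin> insert 2 {k+1..1}" "2 \<notin> {k+1..1}" using k0 by auto
              have S: "(\<Sum>i\<in>{k+1..1}. Q1 i p ** Q1 (k + 2 - i) p) = (\<Sum>i\<in>{k+1..1}. Q2 i p ** Q2 (k + 2 - i) p)"
                by (rule sum.cong[OF refl]) (simp add: ih)
              have s1: "Q1 k p ** amat + (amat ** Q1 k p + (\<Sum>i\<in>{k+1..1}. Q1 i p ** Q1 (k + 2 - i) p)) = 0"
              proof -
                have "(\<Sum>i\<in>{k..2}. Q1 i p ** Q1 (k + 2 - i) p) = 0"
                  using As[rule_format, where n="k+2" and p=p] k0 by simp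
                then show ?thesis unfolding int_split_range[OF k0] using A2
                  by (simp add: sum.insert[OF _ nk(1)] sum.insert[OF fin nk(2)])
              qed
              have s2: "Q2 k p ** amat + (amat ** Q2 k p + (\<Sum>i\<in>{k+1..1}. Q1 i p ** Q1 (k + 2 - i) p)) = 0"
              proof -
                have "(\<Sum>i\<in>{k..2}. Q2 i p ** Q2 (k + 2 - i) p) = 0"
                  using Bs[rule_format, where n="k+2" and p=p] k0 by simp
                then show ?thesis unfolding int_split_range[OF k0] using B2 S
                  by (simp add: sum.insert[OF _ nk(1)] sum.insert[OF fin nk(2)])
              qed
              have c: "Q1 k p ** amat + amat ** Q1 k p = Q2 k p ** amat + amat ** Q2 k p"
              proof -
                have "Q1 k p ** amat + amat ** Q1 k p + (\<Sum>i\<in>{k+1..1}. Q1 i p ** Q1 (k + 2 - i) p)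
                    = Q2 k p ** amat + amat ** Q2 k p + (\<Sum>i\<in>{k+1..1}. Q1 i p ** Q1 (k + 2 - i) p)"
                  using s1 s2 by (simp only: add.assoc)
                then show ?thesis by (rule add_right_imp_eq)
              qed
              have "is_diag (Q1 k p)" using Ad False by blast
              then have od: "Q1 k p $ 1 $ 2 = 0" "Q1 k p $ 2 $ 1 = 0" by (simp_all add: is_diag_def)
              have o1: "Q1 k p = mat2 (Q1 k p $ 1 $ 1) 0 0 (Q1 k p $ 2 $ 2)"
                using mat2_ext[of "Q1 k p"] unfolding od .
              have "is_diag (Q2 k p)" using Bd False by blast
              then have od: "Q2 k p $ 1 $ 2 = 0" "Q2 k p $ 2 $ 1 = 0" by (simp_all add: is_diag_def)
              have o2: "Q2 k p = mat2 (Q2 k p $ 1 $ 1) 0 0 (Q2 k p $ 2 $ 2)"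
                using mat2_ext[of "Q2 k p"] unfolding od .
              have "mat2 (Q1 k p $ 1 $ 1) 0 0 (Q1 k p $ 2 $ 2) ** amat + amat ** mat2 (Q1 k p $ 1 $ 1) 0 0 (Q1 k p $ 2 $ 2)
                  = mat2 (Q2 k p $ 1 $ 1) 0 0 (Q2 k p $ 2 $ 2) ** amat + amat ** mat2 (Q2 k p $ 1 $ 1) 0 0 (Q2 k p $ 2 $ 2)"
                by (simp only: o1[symmetric] o2[symmetric] c)
              then have "mat2 (Q1 k p $ 1 $ 1) 0 0 (Q1 k p $ 2 $ 2) = mat2 (Q2 k p $ 1 $ 1) 0 0 (Q2 k p $ 2 $ 2)"
                unfolding amat_def by (simp add: mat2_mult mat2_add mat2_eq_iff)
              then show "Q1 k p = Q2 k p" using o1 o2 by simp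
            qed
          qed
        qed
      qed
    qed
  qed
  show ?thesis
  proof
    fix k show "Q1 k = Q2 k" using main[of "nat (2 - k)"] by simp
  qed
qed

lemma Qser_Qc: assumes "smooth pp" "smooth q" "smooth r"
  shows "Qser (\<lambda>x. mat2 (pp x) 0 0 (- pp x)) q r = Qc pp q r"
  unfolding Qser_def
  apply (rule the_equality)
   apply (rule Qc_is[OF assms])
  apply (rule Qseries_unique[OF _ Qc_is[OF assms]])
  apply assumption
  done

lemma dx_ecnj: "xd f \<Longrightarrow> dx (\<lambda>p. e * cnj (f p)) p = e * cnj (dx f p)"
proof -
  assume f: "xd f"
  have "xd (\<lambda>p. cnj (f p))" "dx (\<lambda>p. cnj (f p)) = (\<lambda>p. cnj (dx f p))" using dx_cnj[OF f] by blast+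
  then show ?thesis using dx_mult[OF conjunct1[OF dx_const[of e]], of "\<lambda>p. cnj (f p)"] dx_const[of e] by simp
qed

lemma sym_seq:
  assumes eps: "\<epsilon> = 1 \<or> \<epsilon> = -1" and rd: "r = (\<lambda>x. \<epsilon> * cnj (q x))"
    and ppi: "\<And>x. cnj (pp x) = - pp x" and sm: "smooth pp" "smooth q"
  shows "cS pp q r m = (\<lambda>x. \<epsilon> * cnj (bS pp q r m x)) \<and> (\<forall>x. cnj (dS pp q r m x) = - dS pp q r m x)"
proof (induction m rule: less_induct)
  case (less m)
  have smr: "smooth r" unfolding rd by (intro smooth_cmult smooth_cnj sm)
  have ce: "cnj \<epsilon> = \<epsilon>" "\<epsilon> * \<epsilon> = 1" using eps by auto
  have rx: "\<And>x. r x = \<epsilon> * cnj (q x)" using rd by simp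
  show ?case
  proof (cases m rule: nat_cases3)
    case 1 then show ?thesis by (simp add: dS_simps bS_simps cS_simps)
  next
    case 2 then show ?thesis by (simp add: dS_simps bS_simps cS_simps rd)
  next
    case (3 m')
    have ih1: "cS pp q r m' = (\<lambda>x. \<epsilon> * cnj (bS pp q r m' x))" using less.IH[of m'] 3 by simp
    have sl: "Suc m' < m" by (simp add: 3)
    have ih2: "\<And>x. cnj (dS pp q r (Suc m') x) = - dS pp q r (Suc m') x" using conjunct2[OF less.IH[OF sl]] by blast
    have ihk: "\<And>k x. k < m \<Longrightarrow> cS pp q r k x = \<epsilon> * cnj (bS pp q r k x) \<and> cnj (dS pp q r k x) = - dS pp q r k x"
      using less.IH by metis
    have xb: "xd (bS pp q r m')" using smooth_seq[OF sm smr] smooth_xd by blast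
    have C: "cS pp q r m = (\<lambda>x. \<epsilon> * cnj (bS pp q r m x))"
    proof
      fix x
      show "cS pp q r m x = \<epsilon> * cnj (bS pp q r m x)"
        unfolding 3 cS_simps bS_simps ih1 dx_ecnj[OF xb]
        by (simp add: ih2 ppi rx algebra_simps)
    qed
    have D: "cnj (dS pp q r m x) = - dS pp q r m x" for x
    proof -
      define f where "f k = dS pp q r k x * dS pp q r (m - k) x + bS pp q r k x * cS pp q r (m - k) x" for k
      have "cnj (\<Sum>k\<in>{1..Suc m'}. f k) = (\<Sum>k\<in>{1..Suc m'}. dS pp q r k x * dS pp q r (m - k) x + cS pp q r k x * bS pp q r (m - k) x)"
        unfolding cnj_sum
      proof (rule sum.cong[OF refl])
        fix k assume k: "k \<in> {1..Suc m'}"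
        have l: "k < m" "m - k < m" using k 3 by auto
        show "cnj (f k) = dS pp q r k x * dS pp q r (m - k) x + cS pp q r k x * bS pp q r (m - k) x"
          unfolding f_def using ihk[OF l(1), of x] ihk[OF l(2), of x] ce by (simp add: algebra_simps)
      qed
      also have "\<dots> = (\<Sum>k\<in>{1..Suc m'}. f k)"
        unfolding f_def
        by (rule sum.reindex_bij_witness[of _ "\<lambda>k. m - k" "\<lambda>k. m - k"]) (auto simp: 3)
      finally have cs: "cnj (\<Sum>k\<in>{1..Suc m'}. f k) = (\<Sum>k\<in>{1..Suc m'}. f k)" .
      have dm: "dS pp q r m x = \<i>/2 * (\<Sum>k\<in>{1..Suc m'}. f k)" unfolding f_def 3 dS_simps by simp
      show ?thesis unfolding dm using cs by simp
    qed
    show ?thesis using C D by blast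
  qed
qed


lemma lift_sym:
  assumes eps: "\<epsilon> = 1 \<or> \<epsilon> = -1" and rd: "r = (\<lambda>x. \<epsilon> * cnj (q x))"
    and ppi: "\<And>x. cnj (pp x) = - pp x" and sm: "smooth pp" "smooth q"
  shows "lift (cS pp q r) k = (\<lambda>x. \<epsilon> * cnj (lift (bS pp q r) k x))"
    "cnj (lift (dS pp q r) k x) = - lift (dS pp q r) k x"
    "dx (lift (cS pp q r) k) x = \<epsilon> * cnj (dx (lift (bS pp q r) k) x)"
proof -
  note S = sym_seq[OF eps rd ppi sm]
  show L: "lift (cS pp q r) k = (\<lambda>x. \<epsilon> * cnj (lift (bS pp q r) k x))"
    using S by (auto simp: lift_def)
  have S2: "\<And>m x. cnj (dS pp q r m x) = - dS pp q r m x" using S by blast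
  show "cnj (lift (dS pp q r) k x) = - lift (dS pp q r) k x"
    by (simp add: lift_def S2)
  have smr: "smooth r" unfolding rd by (intro smooth_cmult smooth_cnj sm)
  have "xd (lift (bS pp q r) k)" using smooth_lift[OF sm smr] smooth_xd by blast
  then show "dx (lift (cS pp q r) k) x = \<epsilon> * cnj (dx (lift (bS pp q r) k) x)"
    unfolding L by (rule dx_ecnj)
qed

lemma rhs_sym:
  assumes eps: "\<epsilon> = 1 \<or> \<epsilon> = -1" and rd: "r = (\<lambda>x. \<epsilon> * cnj (q x))"
    and ppi: "\<And>x. cnj (pp x) = - pp x" and sm: "smooth pp" "smooth q" and cg: "cnj \<gamma> = \<gamma>"
  shows "(dxM (Qc pp q r k) p + comm (mat2 (pp p) 0 0 (- pp p)) (Qc pp q r k p)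
      + comm (umat q r p) (mat2 (\<gamma> * lift (dS pp q r) k' p) (\<gamma> * lift (bS pp q r) k' p) (\<gamma> * lift (cS pp q r) k' p) (\<gamma> * - lift (dS pp q r) k' p))) $ 2 $ 1
    = \<epsilon> * cnj ((dxM (Qc pp q r k) p + comm (mat2 (pp p) 0 0 (- pp p)) (Qc pp q r k p)
      + comm (umat q r p) (mat2 (\<gamma> * lift (dS pp q r) k' p) (\<gamma> * lift (bS pp q r) k' p) (\<gamma> * lift (cS pp q r) k' p) (\<gamma> * - lift (dS pp q r) k' p))) $ 1 $ 2)"
proof -
  note L = lift_sym[OF eps rd ppi sm]
  have rx: "r p = \<epsilon> * cnj (q p)" using rd by simp
  have ce: "cnj \<epsilon> = \<epsilon>" "\<epsilon> * \<epsilon> = 1" using eps by auto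
  have ck: "lift (cS pp q r) k p = \<epsilon> * cnj (lift (bS pp q r) k p)" using L(1)[of k] by simp
  have ck': "lift (cS pp q r) k' p = \<epsilon> * cnj (lift (bS pp q r) k' p)" using L(1)[of k'] by simp
  have e: "\<epsilon> * (\<epsilon> * z) = z" for z using ce by (simp add: mult.assoc[symmetric])
  show ?thesis
    unfolding Qc_def dxM_mat2 comm_mat2 mat2_add umat_def mat2_nth
    by (simp add: L(2,3) ck ck' rx ppi cg ce e algebra_simps)
qed

lemma Bop_mat2: "Bop \<alpha> (mat2 w x y z) = mat2 ((1 - 2 * \<alpha> * \<i>) * w) ((1 - 2 * \<alpha> * \<i>) * x) ((1 - 2 * \<alpha> * \<i>) * y) ((1 - 2 * \<alpha> * \<i>) * z)"
  by (subst mat2_ext) (simp add: Bop_def)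

theorem theorem4p1:
  fixes \<epsilon> :: complex and j :: nat and q :: "real \<times> real \<Rightarrow> complex"
  assumes "\<epsilon> = 1 \<or> \<epsilon> = -1" and "j \<ge> 1" and "smooth q"
  defines "r \<equiv> (\<lambda>p. \<epsilon> * cnj (q p))"
  shows "(\<forall>p. Gflow (KN_rhs j q r) p = \<epsilon> * cnj (Fflow (KN_rhs j q r) p))
       \<and> (\<forall>p. Gflow (TII_rhs j q r) p = \<epsilon> * cnj (Fflow (TII_rhs j q r) p))
       \<and> (\<forall>\<alpha>::complex. Re \<alpha> = 0 \<longrightarrow>
            (\<forall>p. Gflow (Btw_rhs \<alpha> j q r) p = \<epsilon> * cnj (Fflow (Btw_rhs \<alpha> j q r) p)))"
proof (intro conjI allI impI)
  note eps = assms(1)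
  have rd: "r = (\<lambda>x. \<epsilon> * cnj (q x))" unfolding r_def ..
  have smr: "smooth r" unfolding rd by (intro smooth_cmult smooth_cnj assms(3))
  have ce: "cnj \<epsilon> = \<epsilon>" using eps by auto
  fix p
  define pp0 :: cfun where "pp0 = (\<lambda>_. 0)"
  have sp0: "smooth pp0" unfolding pp0_def by (rule smooth_const)
  have P0e: "(\<lambda>p. 0::complex^2^2) = (\<lambda>x. mat2 (pp0 x) 0 0 (- pp0 x))" by (simp add: pp0_def mat2_zero)
  have Q0: "Qser (\<lambda>p. 0) q r = Qc pp0 q r" unfolding P0e by (rule Qser_Qc[OF sp0 assms(3) smr])
  have i0: "\<And>x. cnj (pp0 x) = - pp0 x" by (simp add: pp0_def)
  show "Gflow (KN_rhs j q r) p = \<epsilon> * cnj (Fflow (KN_rhs j q r) p)"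
    unfolding KN_rhs_def Let_def Q0 Fflow_def Gflow_def Qc_def dxM_mat2 mat2_nth
    by (rule lift_sym(3)[OF eps rd i0 sp0 assms(3)])
next
  fix p
  note eps = assms(1)
  have rd: "r = (\<lambda>x. \<epsilon> * cnj (q x))" unfolding r_def ..
  have smr: "smooth r" unfolding rd by (intro smooth_cmult smooth_cnj assms(3))
  have ce: "cnj \<epsilon> = \<epsilon>" using eps by auto
  define pp :: cfun where "pp = (\<lambda>x. \<i>/2 * q x * r x)"
  have sp: "smooth pp" unfolding pp_def by (intro smooth_mult smooth_const assms(3) smr)
  have Pe: "P0 q r = (\<lambda>x. mat2 (pp x) 0 0 (- pp x))" by (simp add: pp_def P0_def)
  have Q: "Qser (\<lambda>x. mat2 (pp x) 0 0 (- pp x)) q r = Qc pp q r" by (rule Qser_Qc[OF sp assms(3) smr])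
  have ip: "\<And>x. cnj (pp x) = - pp x" by (simp add: pp_def rd ce)
  have M: "Qc pp q r k p = mat2 (1 * lift (dS pp q r) k p) (1 * lift (bS pp q r) k p) (1 * lift (cS pp q r) k p) (1 * - lift (dS pp q r) k p)" for k
    by (simp add: Qc_def)
  show "Gflow (TII_rhs j q r) p = \<epsilon> * cnj (Fflow (TII_rhs j q r) p)"
    unfolding TII_rhs_def Let_def Pe Q Fflow_def Gflow_def M[of "2 - 2 * int j"]
    by (rule rhs_sym[OF eps rd ip sp assms(3)]) simp
next
  fix \<alpha> :: complex and p assume ra: "Re \<alpha> = 0"
  note eps = assms(1)
  have rd: "r = (\<lambda>x. \<epsilon> * cnj (q x))" unfolding r_def ..
  have smr: "smooth r" unfolding rd by (intro smooth_cmult smooth_cnj assms(3))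
  have ce: "cnj \<epsilon> = \<epsilon>" using eps by auto
  have ca: "cnj \<alpha> = - \<alpha>" using ra by (simp add: complex_eq_iff)
  define pp :: cfun where "pp = (\<lambda>x. - \<alpha> * (q x * r x))"
  have sp: "smooth pp" unfolding pp_def by (intro smooth_mult smooth_const assms(3) smr)
  have Pe: "P0a \<alpha> q r = (\<lambda>x. mat2 (pp x) 0 0 (- pp x))" by (simp add: pp_def P0a_def)
  have Q: "Qser (\<lambda>x. mat2 (pp x) 0 0 (- pp x)) q r = Qc pp q r" by (rule Qser_Qc[OF sp assms(3) smr])
  have ip: "\<And>x. cnj (pp x) = - pp x" by (simp add: pp_def rd ce ca)
  have M: "Qc pp q r k p - Bop \<alpha> (Qc pp q r k p) = mat2 ((2 * \<alpha> * \<i>) * lift (dS pp q r) k p) ((2 * \<alpha> * \<i>) * lift (bS pp q r) k p) ((2 * \<alpha> * \<i>) * lift (cS pp q r) k p) ((2 * \<alpha> * \<i>) * - lift (dS pp q r) k p)" for k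
    unfolding Qc_def Bop_mat2 mat2_diff by (simp add: algebra_simps)
  have cg: "cnj (2 * \<alpha> * \<i>) = 2 * \<alpha> * \<i>" by (simp add: ca)
  show "Gflow (Btw_rhs \<alpha> j q r) p = \<epsilon> * cnj (Fflow (Btw_rhs \<alpha> j q r) p)"
    unfolding Btw_rhs_def Let_def Pe Q Fflow_def Gflow_def M[of "2 - 2 * int j"]
    by (rule rhs_sym[OF eps rd ip sp assms(3) cg])
qed


end
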